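(* Let $G$ be a bipartite graph with colour classes of sizes $v$ and $w$, with $e$ edges, in which every vertex has degree at least $2$. Then the number of paths of length $3$ in $G$ is at least $e(e/v-1)(e/w-1)$, and this bound is attained exactly if all vertices of the first class have the same degree and all vertices of the second class have the same degree.
   Context: A path of length $3$ is a sequence of four distinct vertices $(x,y,z,t)$ with $\{x,y\},\{y,z\},\{z,t\}$ edges; a path and its reversal $(t,z,y,x)$ are counted as the same path (so the number of paths of length $3$ equals $\sum_{\{y,z\}\text{ edge}}(d(y)-1)(d(z)-1)$, $d$ denoting degree). *)

theory Defs
  imports Complex_Main
begin

definition simple_graph :: "'a set \<Rightarrow> ('a \<Rightarrow> 'a \<Rightarrow> bool) \<Rightarrow> bool" where
  "simple_graph V adj \<longleftrightarrow> finite V \<and> (\<forall>x y. adj x y \<longrightarrow> x \<in> V \<and> y \<in> V)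
     \<and> (\<forall>x y. adj x y \<longrightarrow> adj y x) \<and> (\<forall>x. \<not> adj x x)"

definition edges :: "'a set \<Rightarrow> ('a \<Rightarrow> 'a \<Rightarrow> bool) \<Rightarrow> 'a set set" where
  "edges V adj = {{x, y} | x y. x \<in> V \<and> y \<in> V \<and> adj x y}"

definition degree :: "'a set \<Rightarrow> ('a \<Rightarrow> 'a \<Rightarrow> bool) \<Rightarrow> 'a \<Rightarrow> nat" where
  "degree V adj x = card {y \<in> V. adj x y}"

definition bipartite_with :: "'a set \<Rightarrow> ('a \<Rightarrow> 'a \<Rightarrow> bool) \<Rightarrow> 'a set \<Rightarrow> 'a set \<Rightarrow> bool" where
  "bipartite_with V adj X Y \<longleftrightarrow> simple_graph V adj \<and> V = X \<union> Y \<and> X \<inter> Y = {}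
     \<and> (\<forall>x y. adj x y \<longrightarrow> (x \<in> X \<and> y \<in> Y) \<or> (x \<in> Y \<and> y \<in> X))"

text \<open>Paths of length 3: sequences (x,y,z,t) of four distinct vertices with consecutive
  vertices adjacent; a path and its reversal are identified, so a path is represented
  by the set containing the sequence and its reversal.\<close>
definition path3_seqs :: "'a set \<Rightarrow> ('a \<Rightarrow> 'a \<Rightarrow> bool) \<Rightarrow> ('a \<times> 'a \<times> 'a \<times> 'a) set" where
  "path3_seqs V adj = {(x, y, z, t). x \<in> V \<and> y \<in> V \<and> z \<in> V \<and> t \<in> V \<and>
      distinct [x, y, z, t] \<and> adj x y \<and> adj y z \<and> adj z t}"

definition paths3 :: "'a set \<Rightarrow> ('a \<Rightarrow> 'a \<Rightarrow> bool) \<Rightarrow> ('a \<times> 'a \<times> 'a \<times> 'a) set set" where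
  "paths3 V adj = (\<lambda>(x, y, z, t). {(x, y, z, t), (t, z, y, x)}) ` path3_seqs V adj"

definition num_paths3 :: "'a set \<Rightarrow> ('a \<Rightarrow> 'a \<Rightarrow> bool) \<Rightarrow> nat" where
  "num_paths3 V adj = card (paths3 V adj)"

end

theory Submission
  imports Defs
begin

lemma quad_half:
  fixes a B p r :: real
  assumes "a \<ge> 2" "B \<ge> 2" "p \<ge> 0" "r \<ge> 0"
  shows "B*(B-1)*p^2 - a*B*p*r + a*(a-1)*r^2 \<ge> 0"
proof -
  have h1: "4*B*(B-1)*a*(a-1) - a^2*B^2 \<ge> 0"
  proof -
    have "(3*a-4)*(3*B-4) \<ge> 2*2" using assms by (intro mult_mono) auto
    hence "4*(B-1)*(a-1) - a*B \<ge> 0" by (simp add: algebra_simps)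
    hence "a*B*(4*(B-1)*(a-1) - a*B) \<ge> 0" using assms by simp
    thus ?thesis by (simp add: algebra_simps power2_eq_square)
  qed
  have "4*B*(B-1)*(B*(B-1)*p^2 - a*B*p*r + a*(a-1)*r^2) = (2*B*(B-1)*p - a*B*r)^2 + (4*B*(B-1)*a*(a-1) - a^2*B^2)*r^2"
    by (simp add: algebra_simps power2_eq_square)
  also have "\<dots> \<ge> 0" using h1 by simp
  finally have "4*B*(B-1)*(B*(B-1)*p^2 - a*B*p*r + a*(a-1)*r^2) \<ge> 0" .
  moreover have "4*B*(B-1) > 0" using assms by simp
  ultimately show ?thesis by (simp add: zero_le_mult_iff)
qed

lemma half_case:
  fixes A B a b :: real
  assumes "A \<ge> 2" "B \<ge> 2" "a \<ge> 2" "b \<ge> 2" "A \<ge> a" "B \<le> b"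
  shows "A*B*(A-a)*(B-b) + (b-1)*B*(A-a)^2 + (a-1)*A*(B-b)^2 \<ge> (a-1)*(A-a)*(B-b)^2"
proof -
  define p where "p = A - a"
  define r where "r = b - B"
  have "A*B*(A-a)*(B-b) + (b-1)*B*(A-a)^2 + (a-1)*A*(B-b)^2 - (a-1)*(A-a)*(B-b)^2
     = B*(B-1)*p^2 - a*B*p*r + a*(a-1)*r^2"
    unfolding p_def r_def by (simp add: algebra_simps power2_eq_square)
  moreover have "B*(B-1)*p^2 - a*B*p*r + a*(a-1)*r^2 \<ge> 0"
    using quad_half[of a B p r] assms unfolding p_def r_def by simp
  ultimately show ?thesis by linarith
qed

lemma key:
  fixes A B a b :: real
  assumes "A \<ge> 2" "B \<ge> 2" "a \<ge> 2" "b \<ge> 2"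
  shows "A*B*(A-a)*(B-b) + (b-1)*B*(A-a)^2 + (a-1)*A*(B-b)^2 \<ge> 0
     \<and> (A*B*(A-a)*(B-b) + (b-1)*B*(A-a)^2 + (a-1)*A*(B-b)^2 = 0 \<longrightarrow> A = a \<and> B = b)"
proof (cases "(A-a)*(B-b) \<ge> 0")
  case True
  have "A*B*(A-a)*(B-b) = (A*B)*((A-a)*(B-b))" by (simp add: algebra_simps)
  moreover have "A*B \<ge> 0" using assms by simp
  ultimately have t1: "A*B*(A-a)*(B-b) \<ge> 0" using True by (metis mult_nonneg_nonneg)
  have t2: "(b-1)*B*(A-a)^2 \<ge> 0" "(a-1)*A*(B-b)^2 \<ge> 0" using assms by simp_all
  have "(b-1)*B*(A-a)^2 = 0 \<Longrightarrow> A = a" using assms by simp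
  moreover have "(a-1)*A*(B-b)^2 = 0 \<Longrightarrow> B = b" using assms by simp
  ultimately show ?thesis using t1 t2 by linarith
next
  case False
  then consider "A > a" "B < b" | "A < a" "B > b"
    by (auto simp: zero_le_mult_iff not_le)
  then show ?thesis
  proof cases
    case 1
    have "(a-1)*(A-a)*(B-b)^2 > 0" using 1 assms by simp
    then show ?thesis using half_case[of A B a b] 1 assms by linarith
  next
    case 2
    have "(b-1)*(B-b)*(A-a)^2 > 0" using 2 assms by simp
    moreover have "B*A*(B-b)*(A-a) + (a-1)*A*(B-b)^2 + (b-1)*B*(A-a)^2 \<ge> (b-1)*(B-b)*(A-a)^2"
      using half_case[of B A b a] 2 assms by linarith
    ultimately show ?thesis by (simp add: algebra_simps) 
  qed
qed

definition nbh :: "'a set \<Rightarrow> ('a \<Rightarrow> 'a \<Rightarrow> bool) \<Rightarrow> 'a \<Rightarrow> 'a set" where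
  "nbh V adj x = {y \<in> V. adj x y}"

lemma bip_basic:
  assumes "bipartite_with V adj X Y"
  shows "finite V" "finite X" "finite Y" "\<And>x y. adj x y \<Longrightarrow> adj y x"
    "\<And>x y. adj x y \<Longrightarrow> x \<in> X \<Longrightarrow> y \<in> Y" "\<And>x y. adj x y \<Longrightarrow> x \<in> Y \<Longrightarrow> y \<in> X"
    "X \<inter> Y = {}" "V = X \<union> Y" "\<And>x. \<not> adj x x" "\<And>x y. adj x y \<Longrightarrow> x \<in> V \<and> y \<in> V"
  using assms unfolding bipartite_with_def simple_graph_def by blast+

lemma card_swap:
  assumes "bipartite_with V adj X Y"
  shows "card (Sigma Y (nbh V adj)) = card (Sigma X (nbh V adj))"
    and "\<And>f::'a \<Rightarrow> real. (\<Sum>(x,y)\<in>Sigma X (nbh V adj). f y) = (\<Sum>(y,x)\<in>Sigma Y (nbh V adj). f y)"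
proof -
  note b = bip_basic[OF assms]
  have bij: "bij_betw (\<lambda>(a,b). (b,a)) (Sigma Y (nbh V adj)) (Sigma X (nbh V adj))"
    unfolding bij_betw_def inj_on_def nbh_def using b by auto
  show "card (Sigma Y (nbh V adj)) = card (Sigma X (nbh V adj))" using bij_betw_same_card[OF bij] .
  fix f :: "'a \<Rightarrow> real"
  show "(\<Sum>(x,y)\<in>Sigma X (nbh V adj). f y) = (\<Sum>(y,x)\<in>Sigma Y (nbh V adj). f y)"
    using sum.reindex_bij_betw[OF bij, of "\<lambda>(x,y). f y", symmetric]
    by (simp add: case_prod_beta)
qed

lemma edges_card:
  assumes "bipartite_with V adj X Y"
  shows "card (edges V adj) = card (Sigma X (nbh V adj))"
proof -
  note b = bip_basic[OF assms]
  have "edges V adj = (\<lambda>(x,y). {x,y}) ` Sigma X (nbh V adj)"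
  proof
    show "edges V adj \<subseteq> (\<lambda>(x,y). {x,y}) ` Sigma X (nbh V adj)"
    proof
      fix E assume "E \<in> edges V adj"
      then obtain x y where E: "E = {x,y}" "x \<in> V" "y \<in> V" "adj x y" unfolding edges_def by auto
      show "E \<in> (\<lambda>(x,y). {x,y}) ` Sigma X (nbh V adj)"
      proof (cases "x \<in> X")
        case True thus ?thesis using E unfolding nbh_def by force
      next
        case False
        hence "x \<in> Y" using E b by auto
        hence "y \<in> X" "adj y x" using E b by auto
        moreover have "E = {y,x}" using E by auto
        ultimately show ?thesis using E unfolding nbh_def by force
      qed
    qed
  next
    show "(\<lambda>(x,y). {x,y}) ` Sigma X (nbh V adj) \<subseteq> edges V adj"
      unfolding edges_def nbh_def using b by auto
  qed
  moreover have "inj_on (\<lambda>(x,y). {x,y}) (Sigma X (nbh V adj))"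
  proof (rule inj_onI)
    fix p q
    assume h0: "p \<in> Sigma X (nbh V adj)" "q \<in> Sigma X (nbh V adj)" "(\<lambda>(x,y). {x,y}) p = (\<lambda>(x,y). {x,y}) q"
    obtain x y x' y' where pq: "p = (x,y)" "q = (x',y')" by (cases p, cases q) auto
    have h: "x \<in> X" "x' \<in> X" "{x,y} = {x',y'}" using h0 pq by auto
    have "y \<in> Y" "y' \<in> Y" using b h0 pq unfolding nbh_def by auto
    with h b have "x = x' \<and> y = y'" by (auto simp: doubleton_eq_iff)
    thus "p = q" using pq by simp
  qed
  ultimately show ?thesis by (simp add: card_image)
qed

lemma paths_card:
  assumes "bipartite_with V adj X Y"
  shows "num_paths3 V adj = (\<Sum>(y,z)\<in>Sigma X (nbh V adj). (card (nbh V adj y) - 1) * (card (nbh V adj z) - 1))"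
proof -
  note b = bip_basic[OF assms]
  define h :: "'a \<times> 'a \<times> 'a \<times> 'a \<Rightarrow> ('a \<times> 'a \<times> 'a \<times> 'a) set" where
    "h = (\<lambda>(x, y, z, t). {(x, y, z, t), (t, z, y, x)})"
  define S where "S = {s \<in> path3_seqs V adj. fst (snd s) \<in> X}"
  have rev: "(t,z,y,x) \<in> path3_seqs V adj" if "(x,y,z,t) \<in> path3_seqs V adj" for x y z t
    using that b unfolding path3_seqs_def by auto
  have "paths3 V adj = h ` S"
  proof
    show "h ` S \<subseteq> paths3 V adj" unfolding paths3_def S_def h_def by auto
    show "paths3 V adj \<subseteq> h ` S"
    proof
      fix P assume "P \<in> paths3 V adj"
      then obtain x y z t where P: "P = h (x,y,z,t)" "(x,y,z,t) \<in> path3_seqs V adj"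
        unfolding paths3_def h_def by auto
      show "P \<in> h ` S"
      proof (cases "y \<in> X")
        case True thus ?thesis using P unfolding S_def by force
      next
        case False
        hence "y \<in> Y" using P b unfolding path3_seqs_def by auto
        hence "z \<in> X" using P b unfolding path3_seqs_def by auto
        moreover have "P = h (t,z,y,x)" using P unfolding h_def by auto
        ultimately show ?thesis using rev[OF P(2)] unfolding S_def by force
      qed
    qed
  qed
  moreover have "inj_on h S"
  proof (rule inj_onI)
    fix p q
    assume h0: "p \<in> S" "q \<in> S" "h p = h q"
    obtain x y z t x' y' z' t' where pq: "p = (x,y,z,t)" "q = (x',y',z',t')" by (cases p, cases q) auto
    have h1: "(x,y,z,t) \<in> S" "(x',y',z',t') \<in> S" "h (x,y,z,t) = h (x',y',z',t')" using h0 pq by auto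
    hence "y \<in> X" "y' \<in> X" "adj y' z'" unfolding S_def path3_seqs_def by auto
    hence "z' \<in> Y" using b by auto
    hence "y \<noteq> z'" using \<open>y \<in> X\<close> b by auto
    hence "x = x' \<and> y = y' \<and> z = z' \<and> t = t'" using h1(3) unfolding h_def by (auto simp: doubleton_eq_iff)
    thus "p = q" using pq by simp
  qed
  ultimately have c1: "num_paths3 V adj = card S" unfolding num_paths3_def by (simp add: card_image)
  define T where "T = Sigma (Sigma X (nbh V adj)) (\<lambda>(y,z). (nbh V adj y - {z}) \<times> (nbh V adj z - {y}))"
  define k where "k = (\<lambda>((y::'a,z::'a),(x::'a,t::'a)). (x,y,z,t))"
  have "S = k ` T"
  proof
    show "k ` T \<subseteq> S"
    proof
      fix s assume "s \<in> k ` T"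
      then obtain x y z t where s: "s = (x,y,z,t)" "y \<in> X" "z \<in> nbh V adj y" "x \<in> nbh V adj y" "x \<noteq> z"
        "t \<in> nbh V adj z" "t \<noteq> y" unfolding T_def k_def by auto
      have "z \<in> Y" "x \<in> Y" using s b unfolding nbh_def by auto
      hence "t \<in> X" using s b unfolding nbh_def by auto
      have "x \<noteq> y" "x \<noteq> t" "y \<noteq> z" "z \<noteq> t" using s b \<open>z \<in> Y\<close> \<open>x \<in> Y\<close> \<open>t \<in> X\<close> by auto
      thus "s \<in> S" using s b unfolding S_def path3_seqs_def nbh_def by auto
    qed
    show "S \<subseteq> k ` T"
    proof
      fix s assume "s \<in> S"
      then obtain x y z t where s: "s = (x,y,z,t)" "(x,y,z,t) \<in> path3_seqs V adj" "y \<in> X"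
        unfolding S_def by (cases s) auto
      hence "((y,z),(x,t)) \<in> T" unfolding T_def path3_seqs_def nbh_def using b by auto
      thus "s \<in> k ` T" using s unfolding k_def by force
    qed
  qed
  moreover have "inj_on k T" unfolding k_def by (rule inj_onI) auto
  ultimately have "card S = card T" by (simp add: card_image)
  also have "\<dots> = (\<Sum>p\<in>Sigma X (nbh V adj). card ((\<lambda>(y,z). (nbh V adj y - {z}) \<times> (nbh V adj z - {y})) p))"
    unfolding T_def
    by (rule card_SigmaI) (use b in \<open>auto simp: nbh_def intro: finite_subset\<close>)
  also have "\<dots> = (\<Sum>(y,z)\<in>Sigma X (nbh V adj). (card (nbh V adj y) - 1) * (card (nbh V adj z) - 1))"
  proof (rule sum.cong[OF refl])
    fix p assume p: "p \<in> Sigma X (nbh V adj)"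
    obtain y z where yz: "p = (y,z)" by (cases p) auto
    have "(y,z) \<in> Sigma X (nbh V adj)" using p yz by simp
    hence "z \<in> nbh V adj y" "y \<in> nbh V adj z" using b unfolding nbh_def by auto
    moreover have "finite (nbh V adj y)" "finite (nbh V adj z)" using b unfolding nbh_def by auto
    ultimately show "card ((\<lambda>(y,z). (nbh V adj y - {z}) \<times> (nbh V adj z - {y})) p) = (\<lambda>(y,z). (card (nbh V adj y) - 1) * (card (nbh V adj z) - 1)) p"
      using yz by (simp add: card_cartesian_product)
  qed
  finally show ?thesis using c1 by simp
qed


lemma ident_gen:
  fixes A B a b :: real
  assumes "A \<noteq> 0" "B \<noteq> 0" "a \<noteq> 0" "b \<noteq> 0"
  shows "(A - 1) * (B - 1) = ((((a-1)*(b-1) + a*(b-1) + b*(a-1)) - a^2*(b-1) * (1 / A)) - b^2*(a-1) * (1 / B)) +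
   (A*B*(A-a)*(B-b) + (b-1)*B*(A-a)^2 + (a-1)*A*(B-b)^2) / (A * B)"
  using assms by (simp add: field_simps power2_eq_square)

lemma sum_gen:
  fixes C a b :: real
  assumes "finite D"
  shows "(\<Sum>p\<in>D. ((C - a * (f p)) - b * (g p)) + G p) = ((real (card D) * C - a * (\<Sum>p\<in>D. f p)) - b * (\<Sum>p\<in>D. g p)) + (\<Sum>p\<in>D. G p)"
  using assms by (simp add: sum.distrib sum_subtractf sum_distrib_left)

lemma final_gen:
  fixes e v w S :: real
  assumes "v > 0" "w > 0"
  shows "e * ((e/v-1)*(e/w-1) + (e/v)*(e/w-1) + (e/w)*(e/v-1)) - (e/v)^2*(e/w-1) * v - (e/w)^2*(e/v-1) * w + S = e * (e / v - 1) * (e / w - 1) + S"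
  using assms by (simp add: field_simps power2_eq_square)

theorem corollary4p6:
  fixes V X Y :: "'a set" and adj :: "'a \<Rightarrow> 'a \<Rightarrow> bool"
  assumes "bipartite_with V adj X Y"
    and "\<forall>x\<in>V. degree V adj x \<ge> 2"
  defines "e \<equiv> real (card (edges V adj))"
    and "v \<equiv> real (card X)"
    and "w \<equiv> real (card Y)"
  shows "real (num_paths3 V adj) \<ge> e * (e / v - 1) * (e / w - 1) \<and>
         (real (num_paths3 V adj) = e * (e / v - 1) * (e / w - 1) \<longleftrightarrow>
           (\<forall>x\<in>X. \<forall>x'\<in>X. degree V adj x = degree V adj x') \<and>
           (\<forall>y\<in>Y. \<forall>y'\<in>Y. degree V adj y = degree V adj y'))"
proof -
  note b = bip_basic[OF assms(1)]
  define N where "N = nbh V adj"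
  define d where "d = (\<lambda>x. real (degree V adj x))"
  define D where "D = Sigma X N"
  have dN: "degree V adj x = card (N x)" for x unfolding N_def nbh_def degree_def by simp
  have finN: "finite (N x)" for x unfolding N_def nbh_def using b by simp
  have finD: "finite D" unfolding D_def using b finN by simp
  have d2: "d x \<ge> 2" if "x \<in> X \<union> Y" for x using assms(2) that b unfolding d_def by auto
  have Dmem: "x \<in> X \<and> y \<in> Y \<and> adj x y" if "(x,y) \<in> D" for x y
    using that b unfolding D_def N_def nbh_def by auto
  have eD: "e = real (card D)" unfolding e_def D_def N_def using edges_card[OF assms(1)] by simp
  have sX: "real (card D) = (\<Sum>x\<in>X. d x)"
    unfolding D_def d_def dN by (subst card_SigmaI) (use b finN in auto)
  have sY: "real (card D) = (\<Sum>y\<in>Y. d y)"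
    unfolding D_def d_def dN card_swap(1)[OF assms(1), folded N_def, symmetric]
    by (subst card_SigmaI) (use b finN in auto)
  have P: "real (num_paths3 V adj) = (\<Sum>p\<in>D. (d (fst p) - 1) * (d (snd p) - 1))"
  proof -
    have "real (num_paths3 V adj) = (\<Sum>p\<in>D. real ((card (N (fst p)) - 1) * (card (N (snd p)) - 1)))"
      unfolding paths_card[OF assms(1)] D_def N_def by (simp add: case_prod_beta)
    also have "\<dots> = (\<Sum>p\<in>D. (d (fst p) - 1) * (d (snd p) - 1))"
    proof (rule sum.cong[OF refl])
      fix p assume "p \<in> D"
      then have "fst p \<in> X" "snd p \<in> Y" using Dmem[of "fst p" "snd p"] by auto
      then have "d (fst p) \<ge> 2" "d (snd p) \<ge> 2" using d2 by auto
      then have "card (N (fst p)) \<ge> 1" "card (N (snd p)) \<ge> 1" unfolding d_def dN by auto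
      then show "real ((card (N (fst p)) - 1) * (card (N (snd p)) - 1)) = (d (fst p) - 1) * (d (snd p) - 1)"
        unfolding d_def dN by (simp add: of_nat_diff)
    qed
    finally show ?thesis .
  qed
  have iX: "(\<Sum>p\<in>D. 1 / d (fst p)) = v"
  proof -
    have "(\<Sum>p\<in>D. 1 / d (fst p)) = (\<Sum>x\<in>X. \<Sum>y\<in>N x. 1 / d x)"
      unfolding D_def by (subst sum.Sigma) (use b finN in \<open>auto simp: case_prod_beta\<close>)
    also have "\<dots> = (\<Sum>x\<in>X. 1)"
    proof (rule sum.cong[OF refl])
      fix x assume "x \<in> X" then have "d x \<ge> 2" using d2 by auto
      then show "(\<Sum>y\<in>N x. 1 / d x) = 1" unfolding d_def dN by simp
    qed
    finally show ?thesis unfolding v_def by simp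
  qed
  have iY: "(\<Sum>p\<in>D. 1 / d (snd p)) = w"
  proof -
    have "(\<Sum>p\<in>D. 1 / d (snd p)) = (\<Sum>(y,x)\<in>Sigma Y N. 1 / d y)"
      using card_swap(2)[OF assms(1), of "\<lambda>y. 1 / d y"] unfolding D_def N_def by (simp add: case_prod_beta)
    also have "\<dots> = (\<Sum>y\<in>Y. \<Sum>x\<in>N y. 1 / d y)"
      by (subst sum.Sigma) (use b finN in \<open>auto simp: case_prod_beta\<close>)
    also have "\<dots> = (\<Sum>y\<in>Y. 1)"
    proof (rule sum.cong[OF refl])
      fix x assume "x \<in> Y" then have "d x \<ge> 2" using d2 by auto
      then show "(\<Sum>y\<in>N x. 1 / d x) = 1" unfolding d_def dN by simp
    qed
    finally show ?thesis unfolding w_def by simp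
  qed
  show ?thesis
  proof (cases "X = {} \<or> Y = {}")
    case True
    have "X = {} \<and> Y = {}"
    proof -
      have "X = {} \<Longrightarrow> Y = {}"
      proof -
        assume "X = {}"
        then have "D = {}" unfolding D_def by simp
        then have "(\<Sum>y\<in>Y. d y) = 0" using sY by simp
        then have "\<forall>y\<in>Y. d y = 0" using d2 b by (subst sum_nonneg_eq_0_iff[symmetric]) force+
        then show "Y = {}" using d2 by force
      qed
      moreover have "Y = {} \<Longrightarrow> X = {}"
      proof -
        assume "Y = {}"
        then have "(\<Sum>y\<in>X. d y) = 0" using sY sX by simp
        then have "\<forall>y\<in>X. d y = 0" using d2 b by (subst sum_nonneg_eq_0_iff[symmetric]) force+
        then show "X = {}" using d2 by force
      qed
      ultimately show ?thesis using True by blast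
    qed
    then have "D = {}" unfolding D_def by auto
    then have "num_paths3 V adj = 0" using P by simp
    then show ?thesis using eD \<open>D = {}\<close> \<open>X = {} \<and> Y = {}\<close> by simp
  next
    case False
    then have vpos: "v > 0" and wpos: "w > 0" unfolding v_def w_def using b by auto
    define \<alpha> where "\<alpha> = e / v"
    define \<beta> where "\<beta> = e / w"
    have "e \<ge> 2 * v"
    proof -
      have "(\<Sum>x\<in>X. (2::real)) \<le> (\<Sum>x\<in>X. d x)" using d2 by (intro sum_mono) auto
      then show ?thesis using sX eD unfolding v_def by simp
    qed
    then have a2: "\<alpha> \<ge> 2" unfolding \<alpha>_def using vpos by (simp add: field_simps)
    have "e \<ge> 2 * w"
    proof -
      have "(\<Sum>x\<in>Y. (2::real)) \<le> (\<Sum>x\<in>Y. d x)" using d2 by (intro sum_mono) auto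
      then show ?thesis using sY eD unfolding w_def by simp
    qed
    then have b2: "\<beta> \<ge> 2" unfolding \<beta>_def using wpos by (simp add: field_simps)
    define K where "K = (\<lambda>A B. A*B*(A-\<alpha>)*(B-\<beta>) + (\<beta>-1)*B*(A-\<alpha>)^2 + (\<alpha>-1)*A*(B-\<beta>)^2)"
    define G where "G = (\<lambda>p. K (d (fst p)) (d (snd p)) / (d (fst p) * d (snd p)))"
    have dD: "d (fst p) \<ge> 2" "d (snd p) \<ge> 2" if "p \<in> D" for p
      using Dmem[of "fst p" "snd p"] that d2 by auto
    define C where "C = (\<alpha>-1)*(\<beta>-1) + \<alpha>*(\<beta>-1) + \<beta>*(\<alpha>-1)"
    have ident: "(d (fst p) - 1) * (d (snd p) - 1) =
       ((C - \<alpha>^2*(\<beta>-1) * (1 / d (fst p))) - \<beta>^2*(\<alpha>-1) * (1 / d (snd p))) + G p"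
      if "p \<in> D" for p
    proof -
      have "d (fst p) \<noteq> 0" "d (snd p) \<noteq> 0" "\<alpha> \<noteq> 0" "\<beta> \<noteq> 0" using dD[OF that] a2 b2 by auto
      then show ?thesis unfolding G_def K_def C_def by (rule ident_gen)
    qed
    have "real (num_paths3 V adj) = (\<Sum>p\<in>D. ((C - \<alpha>^2*(\<beta>-1) * (1 / d (fst p))) - \<beta>^2*(\<alpha>-1) * (1 / d (snd p))) + G p)"
      unfolding P using ident by (rule sum.cong[OF refl])
    also have "\<dots> = ((real (card D) * C - \<alpha>^2*(\<beta>-1) * (\<Sum>p\<in>D. 1 / d (fst p))) - \<beta>^2*(\<alpha>-1) * (\<Sum>p\<in>D. 1 / d (snd p))) + (\<Sum>p\<in>D. G p)"
      by (rule sum_gen[OF finD])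
    also have "\<dots> = e * C - \<alpha>^2*(\<beta>-1) * v - \<beta>^2*(\<alpha>-1) * w + (\<Sum>p\<in>D. G p)"
      by (simp only: iX iY eD)
    also have "\<dots> = e * (e / v - 1) * (e / w - 1) + (\<Sum>p\<in>D. G p)"
      unfolding \<alpha>_def \<beta>_def C_def by (rule final_gen[OF vpos wpos])
    finally have main: "real (num_paths3 V adj) = e * (e / v - 1) * (e / w - 1) + (\<Sum>p\<in>D. G p)" .
    have Gk: "G p \<ge> 0 \<and> (G p = 0 \<longleftrightarrow> d (fst p) = \<alpha> \<and> d (snd p) = \<beta>)" if "p \<in> D" for p
    proof -
      have k: "K (d (fst p)) (d (snd p)) \<ge> 0 \<and> (K (d (fst p)) (d (snd p)) = 0 \<longrightarrow> d (fst p) = \<alpha> \<and> d (snd p) = \<beta>)"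
        unfolding K_def using key[of "d (fst p)" "d (snd p)" \<alpha> \<beta>] dD[OF that] a2 b2 by simp
      have pos: "d (fst p) * d (snd p) > 0" using dD[OF that] by simp
      have "d (fst p) = \<alpha> \<and> d (snd p) = \<beta> \<Longrightarrow> K (d (fst p)) (d (snd p)) = 0" unfolding K_def by simp
      moreover have "G p = K (d (fst p)) (d (snd p)) / (d (fst p) * d (snd p))" unfolding G_def by simp
      moreover have "K (d (fst p)) (d (snd p)) / (d (fst p) * d (snd p)) \<ge> 0"
        using k pos by (intro divide_nonneg_pos) auto
      moreover have "K (d (fst p)) (d (snd p)) / (d (fst p) * d (snd p)) = 0 \<longleftrightarrow> K (d (fst p)) (d (snd p)) = 0"
        using dD[OF that] by simp
      ultimately show ?thesis using k by metis
    qed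
    have Gsum: "(\<Sum>p\<in>D. G p) \<ge> 0" using Gk by (intro sum_nonneg) auto
    have eqiff: "(\<Sum>p\<in>D. G p) = 0 \<longleftrightarrow> (\<forall>p\<in>D. d (fst p) = \<alpha> \<and> d (snd p) = \<beta>)"
      using sum_nonneg_eq_0_iff[OF finD, of G] Gk by auto
    have nbX: "\<exists>y. (x,y) \<in> D" if "x \<in> X" for x
    proof -
      have "card (N x) \<ge> 2" using d2[of x] that unfolding d_def dN by auto
      then obtain y where "y \<in> N x" by fastforce
      then show ?thesis unfolding D_def using that by auto
    qed
    have nbY: "\<exists>x. (x,y) \<in> D" if "y \<in> Y" for y
    proof -
      have "card (N y) \<ge> 2" using d2[of y] that unfolding d_def dN by auto
      then obtain x where "x \<in> N y" by fastforce
      then have "adj x y" "x \<in> X" using b that unfolding N_def nbh_def by auto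
      then show ?thesis unfolding D_def N_def nbh_def using b by auto
    qed
    have cond: "(\<forall>p\<in>D. d (fst p) = \<alpha> \<and> d (snd p) = \<beta>) \<longleftrightarrow>
           (\<forall>x\<in>X. \<forall>x'\<in>X. degree V adj x = degree V adj x') \<and>
           (\<forall>y\<in>Y. \<forall>y'\<in>Y. degree V adj y = degree V adj y')"
    proof
      assume h: "\<forall>p\<in>D. d (fst p) = \<alpha> \<and> d (snd p) = \<beta>"
      have dX: "d x = \<alpha>" if "x \<in> X" for x using nbX[OF that] h by fastforce
      have dY: "d y = \<beta>" if "y \<in> Y" for y using nbY[OF that] h by fastforce
      have A: "degree V adj x = degree V adj x'" if "x \<in> X" "x' \<in> X" for x x'
      proof -
        have "d x = d x'" using dX[OF that(1)] dX[OF that(2)] by (rule trans[OF _ sym])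
        then show ?thesis unfolding d_def by (rule of_nat_eq_iff[THEN iffD1])
      qed
      have B: "degree V adj x = degree V adj x'" if "x \<in> Y" "x' \<in> Y" for x x'
      proof -
        have "d x = d x'" using dY[OF that(1)] dY[OF that(2)] by (rule trans[OF _ sym])
        then show ?thesis unfolding d_def by (rule of_nat_eq_iff[THEN iffD1])
      qed
      show "(\<forall>x\<in>X. \<forall>x'\<in>X. degree V adj x = degree V adj x') \<and>
           (\<forall>y\<in>Y. \<forall>y'\<in>Y. degree V adj y = degree V adj y')" using A B by blast
    next
      assume h: "(\<forall>x\<in>X. \<forall>x'\<in>X. degree V adj x = degree V adj x') \<and>
           (\<forall>y\<in>Y. \<forall>y'\<in>Y. degree V adj y = degree V adj y')"
      have "d x = \<alpha>" if "x \<in> X" for x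
      proof -
        have "(\<Sum>x'\<in>X. d x') = (\<Sum>x'\<in>X. d x)"
        proof (rule sum.cong[OF refl])
          fix x' assume "x' \<in> X"
          then have "degree V adj x' = degree V adj x" using h that by blast
          then show "d x' = d x" unfolding d_def by simp
        qed
        then have "e = v * d x" using sX eD unfolding v_def by simp
        then show ?thesis unfolding \<alpha>_def using vpos by simp
      qed
      moreover have "d y = \<beta>" if "y \<in> Y" for y
      proof -
        have "(\<Sum>x'\<in>Y. d x') = (\<Sum>x'\<in>Y. d y)"
        proof (rule sum.cong[OF refl])
          fix x' assume "x' \<in> Y"
          then have "degree V adj x' = degree V adj y" using h that by blast
          then show "d x' = d y" unfolding d_def by simp
        qed
        then have "e = w * d y" using sY eD unfolding w_def by simp
        then show ?thesis unfolding \<beta>_def using wpos by simp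
      qed
      ultimately show "\<forall>p\<in>D. d (fst p) = \<alpha> \<and> d (snd p) = \<beta>" using Dmem by fastforce
    qed
    show ?thesis using main Gsum eqiff cond by linarith
  qed
qed

end
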